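(* Let $G$ be a persistent graph with vertex order $<$. If four vertices $p_1,p_2,p_3,p_4$ of $G$ form an induced $4$-cycle in this order (edges $\{p_1,p_2\},\{p_2,p_3\},\{p_3,p_4\},\{p_4,p_1\}$ and no others among them), then the two leftmost (with respect to $<$) of these four vertices are either $p_1$ and $p_3$, or $p_2$ and $p_4$.
   Context: A persistent graph is a graph $G$ together with a linear order $v_1<v_2<\dots<v_n$ on $V(G)$ such that (1) $\{v_i,v_{i+1}\}\in E(G)$ for all $i$; (2) X-property: for all $p<q<r<s$, if $\{p,r\}\in E(G)$ and $\{q,s\}\in E(G)$ then $\{p,s\}\in E(G)$; (3) bar-property: if $\{p,q\}\in E(G)$ and $p,q$ are not consecutive in the order, then there is a vertex $r$ with $p<r<q$ adjacent to both $p$ and $q$. *)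

theory Defs
  imports Main
begin

text \<open>A simple graph on a finite vertex set V of a linearly ordered type; the
linear order on V is the restriction of the type's order. E is a symmetric,
irreflexive edge relation with all edges inside V.\<close>

definition simple_graph :: "'a set \<Rightarrow> ('a \<Rightarrow> 'a \<Rightarrow> bool) \<Rightarrow> bool" where
  "simple_graph V E \<longleftrightarrow> finite V \<and> (\<forall>x y. E x y \<longrightarrow> x \<in> V \<and> y \<in> V)
     \<and> (\<forall>x y. E x y \<longrightarrow> E y x) \<and> (\<forall>x. \<not> E x x)"

definition consecutive :: "'a::linorder set \<Rightarrow> 'a \<Rightarrow> 'a \<Rightarrow> bool" where
  "consecutive V x y \<longleftrightarrow> x \<in> V \<and> y \<in> V \<and> x < y \<and> \<not> (\<exists>z\<in>V. x < z \<and> z < y)"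

definition persistent_graph :: "'a::linorder set \<Rightarrow> ('a \<Rightarrow> 'a \<Rightarrow> bool) \<Rightarrow> bool" where
  "persistent_graph V E \<longleftrightarrow> simple_graph V E
     \<and> (\<forall>x y. consecutive V x y \<longrightarrow> E x y)
     \<and> (\<forall>p\<in>V. \<forall>q\<in>V. \<forall>r\<in>V. \<forall>s\<in>V. p < q \<and> q < r \<and> r < s \<and> E p r \<and> E q s \<longrightarrow> E p s)
     \<and> (\<forall>p q. E p q \<and> p < q \<and> \<not> consecutive V p q \<longrightarrow> (\<exists>r\<in>V. p < r \<and> r < q \<and> E p r \<and> E r q))"

definition induced_C4 :: "('a \<Rightarrow> 'a \<Rightarrow> bool) \<Rightarrow> 'a \<Rightarrow> 'a \<Rightarrow> 'a \<Rightarrow> 'a \<Rightarrow> bool" where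
  "induced_C4 E p1 p2 p3 p4 \<longleftrightarrow> distinct [p1, p2, p3, p4]
     \<and> E p1 p2 \<and> E p2 p3 \<and> E p3 p4 \<and> E p4 p1 \<and> \<not> E p1 p3 \<and> \<not> E p2 p4"

definition two_leftmost :: "'a::linorder set \<Rightarrow> 'a \<Rightarrow> 'a \<Rightarrow> bool" where
  "two_leftmost P a b \<longleftrightarrow> a \<in> P \<and> b \<in> P \<and> a \<noteq> b \<and> (\<forall>c\<in>P - {a, b}. a < c \<and> b < c)"

end

theory Submission
  imports Defs
begin

lemma pg_fin: "persistent_graph V E \<Longrightarrow> finite V"
  by (simp add: persistent_graph_def simple_graph_def)
lemma pg_sym: "persistent_graph V E \<Longrightarrow> E x y \<Longrightarrow> E y x"
  unfolding persistent_graph_def simple_graph_def by blast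
lemma pg_in: "persistent_graph V E \<Longrightarrow> E x y \<Longrightarrow> x \<in> V \<and> y \<in> V"
  unfolding persistent_graph_def simple_graph_def by blast
lemma pg_X: "persistent_graph V E \<Longrightarrow> p \<in> V \<Longrightarrow> q \<in> V \<Longrightarrow> r \<in> V \<Longrightarrow> s \<in> V \<Longrightarrow>
   p < q \<Longrightarrow> q < r \<Longrightarrow> r < s \<Longrightarrow> E p r \<Longrightarrow> E q s \<Longrightarrow> E p s"
  unfolding persistent_graph_def by blast
lemma pg_bar: "persistent_graph V E \<Longrightarrow> E p q \<Longrightarrow> p < q \<Longrightarrow> \<not> consecutive V p q \<Longrightarrow>
   \<exists>r\<in>V. p < r \<and> r < q \<and> E p r \<and> E r q"
  unfolding persistent_graph_def by blast
lemma pg_cons: "persistent_graph V E \<Longrightarrow> consecutive V x y \<Longrightarrow> E x y"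
  unfolding persistent_graph_def by blast

definition nb :: "'a::linorder set \<Rightarrow> 'a \<Rightarrow> 'a \<Rightarrow> bool" where
  "nb C a b \<longleftrightarrow> \<not> (\<exists>c\<in>C. a < c \<and> c < b)"

definition cyc :: "'a::linorder set \<Rightarrow> ('a \<Rightarrow> 'a \<Rightarrow> bool) \<Rightarrow> 'a set \<Rightarrow> 'a \<Rightarrow> 'a \<Rightarrow> bool" where
  "cyc V E C m M \<longleftrightarrow> finite C \<and> C \<subseteq> V \<and> 4 \<le> card C \<and> m \<in> C \<and> M \<in> C \<and> (\<forall>c\<in>C. m \<le> c \<and> c \<le> M)
     \<and> (\<forall>a\<in>C. \<forall>b\<in>C. a < b \<longrightarrow> (E a b \<longleftrightarrow> (nb C a b \<or> (a = m \<and> b = M))))"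

definition ipath :: "'a::linorder set \<Rightarrow> ('a \<Rightarrow> 'a \<Rightarrow> bool) \<Rightarrow> 'a set \<Rightarrow> 'a \<Rightarrow> 'a \<Rightarrow> bool" where
  "ipath V E C m u \<longleftrightarrow> finite C \<and> C \<subseteq> V \<and> 3 \<le> card C \<and> m \<in> C \<and> u \<in> C \<and> (\<forall>c\<in>C. m \<le> c \<and> c \<le> u)
     \<and> (\<forall>a\<in>C. \<forall>b\<in>C. a < b \<longrightarrow> (E a b \<longleftrightarrow> nb C a b))"

lemma ext_right:
  assumes pg: "persistent_graph V E"
  shows "ipath V E C m u \<Longrightarrow> u < t \<Longrightarrow> t \<in> V \<Longrightarrow> E m t \<Longrightarrow> (\<forall>c\<in>C. c \<noteq> m \<and> c \<noteq> u \<longrightarrow> \<not> E c t)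
    \<Longrightarrow> (\<forall>v\<in>V. u < v \<and> v < t \<longrightarrow> \<not> E m v) \<Longrightarrow> \<exists>C'. cyc V E C' m t"
proof (induction "card {v\<in>V. u < v \<and> v < t}" arbitrary: C u rule: less_induct)
  case less
  note ip = less.prems(1)[unfolded ipath_def]
  show ?case
  proof (cases "E u t")
    case True
    have "cyc V E (insert t C) m t"
      unfolding cyc_def
    proof (intro conjI ballI impI)
      show "finite (insert t C)" using ip by simp
      show "insert t C \<subseteq> V" using ip less.prems by simp
      have "t \<notin> C" using ip less.prems(2) by force
      then show "4 \<le> card (insert t C)" using ip by simp
      show "m \<in> insert t C" using ip by simp
      show "t \<in> insert t C" by simp
      fix c assume "c \<in> insert t C" then show "m \<le> c" "c \<le> t" using ip less.prems(2) by force+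
    next
      fix a b assume ab: "a \<in> insert t C" "b \<in> insert t C" "a < b"
      show "E a b \<longleftrightarrow> (nb (insert t C) a b \<or> (a = m \<and> b = t))"
      proof (cases "b = t")
        case True
        then have a: "a \<in> C" using ab by auto
        have au: "a \<le> u" using ip a by auto
        have "nb (insert t C) a b \<longleftrightarrow> a = u"
        proof
          assume "nb (insert t C) a b"
          then show "a = u" using au ip True less.prems(2) unfolding nb_def by force
        next
          assume "a = u"
          then show "nb (insert t C) a b" using ip True unfolding nb_def by force
        qed
        then show ?thesis using True a less.prems(4,5) \<open>E u t\<close> by auto
      next
        case False
        then have "b \<in> C" using ab by auto
        then have "a \<in> C" using ab ip less.prems(2) by force
        moreover have "nb (insert t C) a b \<longleftrightarrow> nb C a b"
          using ip \<open>b \<in> C\<close> less.prems(2) unfolding nb_def by force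
        ultimately show ?thesis using ip ab False by auto
      qed
    qed
    then show ?thesis by blast
  next
    case False
    define S where "S = {v\<in>V. u < v \<and> v \<le> t \<and> E u v}"
    have finV: "finite V" using pg_fin[OF pg] .
    have fS: "finite S" unfolding S_def using finV by simp
    define s0 where "s0 = Min {v\<in>V. u < v}"
    have ne0: "{v\<in>V. u < v} \<noteq> {}" using less.prems(2,3) by auto
    have s0: "s0 \<in> V" "u < s0" using Min_in[OF _ ne0] finV unfolding s0_def by auto
    have s0le: "\<And>v. v \<in> V \<Longrightarrow> u < v \<Longrightarrow> s0 \<le> v"
      unfolding s0_def using finV by (simp add: Min_le)
    have s0t: "s0 \<le> t" using s0le less.prems(2,3) by simp
    have uV: "u \<in> V" using ip by blast
    have "consecutive V u s0" unfolding consecutive_def using s0 uV s0le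
      by (meson leD)
    then have "E u s0" using pg_cons[OF pg] by blast
    then have "s0 \<in> S" unfolding S_def using s0 s0t by auto
    then have neS: "S \<noteq> {}" by auto
    define s where "s = Max S"
    have sS: "s \<in> S" using Max_in[OF fS neS] s_def by simp
    have smax: "\<And>v. v \<in> S \<Longrightarrow> v \<le> s" using Max_ge[OF fS] s_def by simp
    have sV: "s \<in> V" and us: "u < s" and st: "s \<le> t" and Eus: "E u s" using sS S_def by auto
    have "s \<noteq> t" using False Eus by auto
    with st have st: "s < t" by simp
    have nEms: "\<not> E m s" using less.prems(6) sV us st by blast
    define A where "A = {c\<in>C. E c s}"
    have uA: "u \<in> A" using ip Eus A_def by simp
    have fA: "finite A" using ip A_def by simp
    define a where "a = Min A"
    have aA: "a \<in> A" using Min_in[OF fA] uA a_def by auto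
    have amin: "\<And>c. c \<in> A \<Longrightarrow> a \<le> c" using Min_le[OF fA] a_def by simp
    have aC: "a \<in> C" and Eas: "E a s" using aA A_def by auto
    have am: "a \<noteq> m" using nEms Eas by auto
    have au: "a \<le> u" using amin uA by simp
    have ma: "m < a" using ip aC am by force
    define C' where "C' = insert s {c\<in>C. c \<le> a}"
    have sC: "s \<notin> {c\<in>C. c \<le> a}" using au us by auto
    have ipC': "ipath V E C' m s"
      unfolding ipath_def
    proof (intro conjI ballI impI)
      show "finite C'" using ip C'_def by simp
      show "C' \<subseteq> V" using ip sV C'_def by auto
      have "{m, a} \<subseteq> {c\<in>C. c \<le> a}" using ip aC ma by auto
      moreover have "card {m, a} = 2" using am by simp
      moreover have "finite {c\<in>C. c \<le> a}" using ip by simp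
      ultimately have "2 \<le> card {c\<in>C. c \<le> a}" by (metis card_mono)
      then show "3 \<le> card C'" using sC ip C'_def by simp
      show "m \<in> C'" using ip ma C'_def by (simp add: less_imp_le)
      show "s \<in> C'" using C'_def by simp
      fix c assume "c \<in> C'" then show "m \<le> c" "c \<le> s" using ip C'_def au us ma by force+
    next
      fix x y assume xy: "x \<in> C'" "y \<in> C'" "x < y"
      show "E x y \<longleftrightarrow> nb C' x y"
      proof (cases "y = s")
        case True
        then have x: "x \<in> C" "x \<le> a" using xy C'_def by auto
        have "nb C' x y \<longleftrightarrow> x = a"
        proof
          assume "nb C' x y"
          then show "x = a" using x True aC au us unfolding nb_def C'_def by force
        next
          assume "x = a"
          then show "nb C' x y" using True unfolding nb_def C'_def by force
        qed
        moreover have "E x s \<longleftrightarrow> x = a" using Eas amin x A_def by force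
        ultimately show ?thesis using True by simp
      next
        case False
        then have "y \<in> C" "y \<le> a" using xy C'_def by auto
        moreover have "x \<noteq> s" using xy(3) \<open>y \<le> a\<close> au us by simp
        then have "x \<in> C" using xy(1) unfolding C'_def by blast
        moreover have "{c\<in>C'. x < c \<and> c < y} = {c\<in>C. x < c \<and> c < y}"
          using \<open>y \<le> a\<close> au us unfolding C'_def by auto
        then have "nb C' x y \<longleftrightarrow> nb C x y" unfolding nb_def by blast
        ultimately show ?thesis using ip xy by auto
      qed
    qed
    have sub: "{v\<in>V. s < v \<and> v < t} \<subset> {v\<in>V. u < v \<and> v < t}" using us st sV by auto
    have lt: "card {v\<in>V. s < v \<and> v < t} < card {v\<in>V. u < v \<and> v < t}"
      using psubset_card_mono[OF _ sub] finV by simp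
    have h1: "\<forall>c\<in>C'. c \<noteq> m \<and> c \<noteq> s \<longrightarrow> \<not> E c t"
    proof (intro ballI impI)
      fix c assume c: "c \<in> C'" "c \<noteq> m \<and> c \<noteq> s"
      then have "c \<in> C" unfolding C'_def by blast
      then show "\<not> E c t" using less.prems(5) False c(2) by blast
    qed
    have h2: "\<forall>v\<in>V. s < v \<and> v < t \<longrightarrow> \<not> E m v" using less.prems(6) us by auto
    show ?thesis using less.hyps[OF lt ipC' st less.prems(3,4) h1 h2] .
  qed
qed


lemma ext_left:
  assumes pg: "persistent_graph V E"
  shows "ipath V E C u M \<Longrightarrow> t < u \<Longrightarrow> t \<in> V \<Longrightarrow> E t M \<Longrightarrow> (\<forall>c\<in>C. c \<noteq> M \<and> c \<noteq> u \<longrightarrow> \<not> E t c)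
    \<Longrightarrow> (\<forall>v\<in>V. t < v \<and> v < u \<longrightarrow> \<not> E v M) \<Longrightarrow> \<exists>C'. cyc V E C' t M"
proof (induction "card {v\<in>V. t < v \<and> v < u}" arbitrary: C u rule: less_induct)
  case less
  note ip = less.prems(1)[unfolded ipath_def]
  show ?case
  proof (cases "E t u")
    case True
    have "cyc V E (insert t C) t M"
      unfolding cyc_def
    proof (intro conjI ballI impI)
      show "finite (insert t C)" using ip by simp
      show "insert t C \<subseteq> V" using ip less.prems by simp
      have "t \<notin> C" using ip less.prems(2) by force
      then show "4 \<le> card (insert t C)" using ip by simp
      show "M \<in> insert t C" using ip by simp
      show "t \<in> insert t C" by simp
      fix c assume "c \<in> insert t C" then show "t \<le> c" "c \<le> M" using ip less.prems(2) by force+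
    next
      fix a b assume ab: "a \<in> insert t C" "b \<in> insert t C" "a < b"
      show "E a b \<longleftrightarrow> (nb (insert t C) a b \<or> (a = t \<and> b = M))"
      proof (cases "a = t")
        case True
        then have b: "b \<in> C" using ab by auto
        have ub: "u \<le> b" using ip b by auto
        have "nb (insert t C) a b \<longleftrightarrow> b = u"
        proof
          assume "nb (insert t C) a b"
          then show "b = u" using ub ip True less.prems(2) unfolding nb_def by force
        next
          assume "b = u"
          then show "nb (insert t C) a b" using ip True unfolding nb_def by force
        qed
        then show ?thesis using True b less.prems(4,5) \<open>E t u\<close> by auto
      next
        case False
        then have "a \<in> C" using ab by auto
        then have "b \<in> C" using ab ip less.prems(2) by force
        moreover have "nb (insert t C) a b \<longleftrightarrow> nb C a b"
          using ip \<open>a \<in> C\<close> less.prems(2) unfolding nb_def by force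
        ultimately show ?thesis using ip ab False \<open>a \<in> C\<close> by auto
      qed
    qed
    then show ?thesis by blast
  next
    case False
    define S where "S = {v\<in>V. t \<le> v \<and> v < u \<and> E v u}"
    have finV: "finite V" using pg_fin[OF pg] .
    have fS: "finite S" unfolding S_def using finV by simp
    define s0 where "s0 = Max {v\<in>V. v < u}"
    have ne0: "{v\<in>V. v < u} \<noteq> {}" using less.prems(2,3) by auto
    have s0: "s0 \<in> V" "s0 < u" using Max_in[OF _ ne0] finV unfolding s0_def by auto
    have s0le: "\<And>v. v \<in> V \<Longrightarrow> v < u \<Longrightarrow> v \<le> s0"
      unfolding s0_def using finV by (simp add: Max_ge)
    have s0t: "t \<le> s0" using s0le less.prems(2,3) by simp
    have uV: "u \<in> V" using ip by blast
    have "consecutive V s0 u" unfolding consecutive_def using s0 uV s0le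
      by (meson leD)
    then have "E s0 u" using pg_cons[OF pg] by blast
    then have "s0 \<in> S" unfolding S_def using s0 s0t by auto
    then have neS: "S \<noteq> {}" by auto
    define s where "s = Min S"
    have sS: "s \<in> S" using Min_in[OF fS neS] s_def by simp
    have sV: "s \<in> V" and us: "s < u" and st: "t \<le> s" and Eus: "E s u" using sS S_def by auto
    have "s \<noteq> t" using False Eus by auto
    with st have st: "t < s" by simp
    have nEms: "\<not> E s M" using less.prems(6) sV us st by blast
    define A where "A = {c\<in>C. E s c}"
    have uA: "u \<in> A" using ip Eus A_def by simp
    have fA: "finite A" using ip A_def by simp
    define a where "a = Max A"
    have aA: "a \<in> A" using Max_in[OF fA] uA a_def by auto
    have amin: "\<And>c. c \<in> A \<Longrightarrow> c \<le> a" using Max_ge[OF fA] a_def by simp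
    have aC: "a \<in> C" and Eas: "E s a" using aA A_def by auto
    have am: "a \<noteq> M" using nEms Eas by auto
    have au: "u \<le> a" using amin uA by simp
    have ma: "a < M" using ip aC am by force
    define C' where "C' = insert s {c\<in>C. a \<le> c}"
    have sC: "s \<notin> {c\<in>C. a \<le> c}" using au us by auto
    have ipC': "ipath V E C' s M"
      unfolding ipath_def
    proof (intro conjI ballI impI)
      show "finite C'" using ip C'_def by simp
      show "C' \<subseteq> V" using ip sV C'_def by auto
      have "{M, a} \<subseteq> {c\<in>C. a \<le> c}" using ip aC ma by auto
      moreover have "card {M, a} = 2" using am by simp
      moreover have "finite {c\<in>C. a \<le> c}" using ip by simp
      ultimately have "2 \<le> card {c\<in>C. a \<le> c}" by (metis card_mono)
      then show "3 \<le> card C'" using sC ip C'_def by simp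
      show "M \<in> C'" using ip ma C'_def by (simp add: less_imp_le)
      show "s \<in> C'" using C'_def by simp
      fix c assume "c \<in> C'" then show "s \<le> c" "c \<le> M" using ip C'_def au us ma by force+
    next
      fix x y assume xy: "x \<in> C'" "y \<in> C'" "x < y"
      show "E x y \<longleftrightarrow> nb C' x y"
      proof (cases "x = s")
        case True
        then have x: "y \<in> C" "a \<le> y" using xy C'_def by auto
        have "nb C' x y \<longleftrightarrow> y = a"
        proof
          assume "nb C' x y"
          moreover have "y \<noteq> a \<Longrightarrow> a \<in> C' \<and> x < a \<and> a < y"
            using x True aC au us unfolding C'_def by auto
          ultimately show "y = a" unfolding nb_def by blast
        next
          assume "y = a"
          then show "nb C' x y" using True unfolding nb_def C'_def by force
        qed
        moreover have "E s y \<longleftrightarrow> y = a" using Eas amin x A_def by force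
        ultimately show ?thesis using True by simp
      next
        case False
        then have "x \<in> C" "a \<le> x" using xy C'_def by auto
        moreover have "y \<noteq> s" using xy(3) \<open>a \<le> x\<close> au us by simp
        then have "y \<in> C" using xy(2) unfolding C'_def by blast
        moreover have "{c\<in>C'. x < c \<and> c < y} = {c\<in>C. x < c \<and> c < y}"
          using \<open>a \<le> x\<close> au us unfolding C'_def by auto
        then have "nb C' x y \<longleftrightarrow> nb C x y" unfolding nb_def by blast
        ultimately show ?thesis using ip xy by auto
      qed
    qed
    have sub: "{v\<in>V. t < v \<and> v < s} \<subset> {v\<in>V. t < v \<and> v < u}" using us st sV by auto
    have lt: "card {v\<in>V. t < v \<and> v < s} < card {v\<in>V. t < v \<and> v < u}"
      using psubset_card_mono[OF _ sub] finV by simp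
    have h1: "\<forall>c\<in>C'. c \<noteq> M \<and> c \<noteq> s \<longrightarrow> \<not> E t c"
    proof (intro ballI impI)
      fix c assume c: "c \<in> C'" "c \<noteq> M \<and> c \<noteq> s"
      then have "c \<in> C" unfolding C'_def by blast
      then show "\<not> E t c" using less.prems(5) False c(2) by blast
    qed
    have h2: "\<forall>v\<in>V. t < v \<and> v < s \<longrightarrow> \<not> E v M" using less.prems(6) us by auto
    show ?thesis using less.hyps[OF lt ipC' st less.prems(3,4) h1 h2] .
  qed
qed


lemma no_cyc:
  assumes pg: "persistent_graph V E"
  shows "cyc V E C m M \<Longrightarrow> False"
proof (induction "card {v\<in>V. m \<le> v \<and> v \<le> M}" arbitrary: C m M rule: less_induct)
  case less
  note cy = less.prems[unfolded cyc_def]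
  have finV: "finite V" using pg_fin[OF pg] .
  have fC: "finite C" and CV: "C \<subseteq> V" and c4: "4 \<le> card C" and mC: "m \<in> C" and MC: "M \<in> C"
    and bnd: "\<And>c. c \<in> C \<Longrightarrow> m \<le> c \<and> c \<le> M"
    and ed: "\<And>a b. a \<in> C \<Longrightarrow> b \<in> C \<Longrightarrow> a < b \<Longrightarrow> (E a b \<longleftrightarrow> (nb C a b \<or> (a = m \<and> b = M)))"
    using cy by auto
  have mM: "m < M"
  proof (rule ccontr)
    assume "\<not> m < M"
    then have "C \<subseteq> {m}" using bnd by force
    then have "card C \<le> 1" using card_mono[of "{m}" C] by simp
    then show False using c4 by simp
  qed
  have EmM: "E m M" using ed[OF mC MC mM] by simp
  define q where "q = Min (C - {m})"
  define p where "p = Max (C - {M})"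
  have ne1: "C - {m} \<noteq> {}" using MC mM by auto
  have ne2: "C - {M} \<noteq> {}" using mC mM by auto
  have qC: "q \<in> C" "q \<noteq> m" using Min_in[OF _ ne1] fC q_def by auto
  have qmin: "\<And>c. c \<in> C \<Longrightarrow> c \<noteq> m \<Longrightarrow> q \<le> c" using Min_le[of "C - {m}"] fC q_def by auto
  have pC: "p \<in> C" "p \<noteq> M" using Max_in[OF _ ne2] fC p_def by auto
  have pmax: "\<And>c. c \<in> C \<Longrightarrow> c \<noteq> M \<Longrightarrow> c \<le> p" using Max_ge[of "C - {M}"] fC p_def by auto
  have mq: "m < q" using bnd[OF qC(1)] qC(2) by auto
  have pM: "p < M" using bnd[OF pC(1)] pC(2) by auto
  have qp: "q < p"
  proof (rule ccontr)
    assume "\<not> q < p"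
    then have "C \<subseteq> {m, q, M}" using qmin pmax by force
    then have "card C \<le> card {m, q, M}" by (intro card_mono) auto
    also have "\<dots> \<le> 3" by (rule order_trans[OF card_insert_le_m1]) (auto simp: card_insert_le_m1)
    finally show False using c4 by simp
  qed
  have qV: "q \<in> V" and pV: "p \<in> V" and mV: "m \<in> V" and MV: "M \<in> V" using CV qC pC mC MC by auto
  have nbmq: "nb C m q" unfolding nb_def using qmin by force
  have nbpM: "nb C p M" unfolding nb_def using pmax by force
  have Emq: "E m q" using ed[OF mC qC(1) mq] nbmq by simp
  have EpM: "E p M" using ed[OF pC(1) MC pM] nbpM by simp
  have "\<not> consecutive V m M" unfolding consecutive_def using qV mq qp pM by auto
  then obtain r where r: "r \<in> V" "m < r" "r < M" "E m r" "E r M" using pg_bar[OF pg EmM mM] by blast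
  have rside: "r < q \<or> p < r"
  proof (rule ccontr)
    assume "\<not> (r < q \<or> p < r)"
    then have qr: "q \<le> r" and rp: "r \<le> p" by auto
    show False
    proof (cases "r \<in> C")
      case True
      have "nb C m r" using ed[OF mC True r(2)] r(4) rp pM by auto
      then have "r \<le> q" using qC mq unfolding nb_def by force
      moreover have "nb C r M" using ed[OF True MC r(3)] r(5) r(2) by auto
      then have "p \<le> r" using pC pM unfolding nb_def by force
      ultimately show False using qr rp qp by simp
    next
      case False
      define L where "L = {c\<in>C. c < r}"
      define U where "U = {c\<in>C. r < c}"
      have qL: "q \<in> L" using qC qr False L_def by (auto simp: le_less)
      have pU: "p \<in> U" using pC rp False U_def by (auto simp: le_less)
      have fL: "finite L" "finite U" using fC L_def U_def by auto
      define a where "a = Max L"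
      define b where "b = Min U"
      have aL: "a \<in> L" using Max_in[OF fL(1)] qL a_def by auto
      have bU: "b \<in> U" using Min_in[OF fL(2)] pU b_def by auto
      have aq: "q \<le> a" using Max_ge[OF fL(1) qL] a_def by simp
      have bp: "b \<le> p" using Min_le[OF fL(2) pU] b_def by simp
      have aC: "a \<in> C" "a < r" and bC: "b \<in> C" "r < b" using aL bU L_def U_def by auto
      have "nb C a b"
        unfolding nb_def
      proof
        assume "\<exists>c\<in>C. a < c \<and> c < b"
        then obtain c where c: "c \<in> C" "a < c" "c < b" by blast
        show False
        proof (cases "c < r")
          case True
          then have "c \<in> L" using c L_def by simp
          then show False using Max_ge[OF fL(1)] a_def c(2) by fastforce
        next
          case False
          then have "r < c" using c(1) \<open>r \<notin> C\<close> by (cases "c = r") auto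
          then have "c \<in> U" using c U_def by simp
          then show False using Min_le[OF fL(2)] b_def c(3) by fastforce
        qed
      qed
      have ab: "a < b" using aC bC by simp
      have Eab: "E a b" using ed[OF aC(1) bC(1) ab] \<open>nb C a b\<close> by simp
      have "E a M" using pg_X[OF pg _ r(1) _ MV aC(2) bC(2) _ Eab r(5)] aC bC CV bp pM by (meson order.strict_trans1 subsetD)
      moreover have "a \<noteq> m" using aq mq by simp
      moreover have "\<not> nb C a M" unfolding nb_def using bC ab bp pM by auto
      ultimately show False using ed[OF aC(1) MC] aC(2) r(3) by auto
    qed
  qed
  show False
  proof (cases "p < r")
    case True
    define T where "T = {v\<in>V. p < v \<and> v < M \<and> E m v}"
    have rT: "r \<in> T" using r True T_def by simp
    have fT: "finite T" using finV T_def by simp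
    define t where "t = Min T"
    have tT: "t \<in> T" using Min_in[OF fT] rT t_def by auto
    have tmin: "\<And>v. v \<in> T \<Longrightarrow> t \<le> v" using Min_le[OF fT] t_def by simp
    have tV: "t \<in> V" and pt: "p < t" and tM: "t < M" and Emt: "E m t" using tT T_def by auto
    have ip: "ipath V E (C - {M}) m p"
      unfolding ipath_def
    proof (intro conjI ballI impI)
      show "finite (C - {M})" using fC by simp
      show "C - {M} \<subseteq> V" using CV by auto
      show "3 \<le> card (C - {M})" using c4 MC fC by simp
      show "m \<in> C - {M}" using mC mM by simp
      show "p \<in> C - {M}" using pC by simp
      fix c assume "c \<in> C - {M}" then show "m \<le> c" "c \<le> p" using bnd pmax by auto
    next
      fix a b assume ab: "a \<in> C - {M}" "b \<in> C - {M}" "a < b"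
      have "b \<le> M" using bnd ab by blast
      then have "{c\<in>C - {M}. a < c \<and> c < b} = {c\<in>C. a < c \<and> c < b}" by auto
      then have "nb (C - {M}) a b \<longleftrightarrow> nb C a b" unfolding nb_def by blast
      then show "E a b \<longleftrightarrow> nb (C - {M}) a b" using ed[of a b] ab by auto
    qed
    have h1: "\<forall>c\<in>C - {M}. c \<noteq> m \<and> c \<noteq> p \<longrightarrow> \<not> E c t"
    proof (intro ballI impI notI)
      fix c assume c: "c \<in> C - {M}" "c \<noteq> m \<and> c \<noteq> p" and Ect: "E c t"
      have cp: "c < p" using pmax c by force
      have "E c M" using pg_X[OF pg _ pV tV MV cp pt tM Ect EpM] c CV by auto
      moreover have "\<not> nb C c M" unfolding nb_def using pC cp pM by auto
      moreover have cM: "c < M" using cp pM by simp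
      ultimately show False using ed[of c M] c MC by auto
    qed
    have h2: "\<forall>v\<in>V. p < v \<and> v < t \<longrightarrow> \<not> E m v" using tmin T_def tM by force
    obtain C' where C': "cyc V E C' m t" using ext_right[OF pg ip pt tV Emt h1 h2] by blast
    have "{v\<in>V. m \<le> v \<and> v \<le> t} \<subset> {v\<in>V. m \<le> v \<and> v \<le> M}" using tM MV mM by force
    then have "card {v\<in>V. m \<le> v \<and> v \<le> t} < card {v\<in>V. m \<le> v \<and> v \<le> M}"
      by (rule psubset_card_mono[rotated]) (simp add: finV)
    then show False using less.hyps C' by blast
  next
    case False
    then have rq: "r < q" using rside by simp
    define T where "T = {v\<in>V. m < v \<and> v < q \<and> E v M}"
    have rT: "r \<in> T" using r rq T_def by simp
    have fT: "finite T" using finV T_def by simp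
    define t where "t = Max T"
    have tT: "t \<in> T" using Max_in[OF fT] rT t_def by auto
    have tmax: "\<And>v. v \<in> T \<Longrightarrow> v \<le> t" using Max_ge[OF fT] t_def by simp
    have tV: "t \<in> V" and mt: "m < t" and tq: "t < q" and EtM: "E t M" using tT T_def by auto
    have ip: "ipath V E (C - {m}) q M"
      unfolding ipath_def
    proof (intro conjI ballI impI)
      show "finite (C - {m})" using fC by simp
      show "C - {m} \<subseteq> V" using CV by auto
      show "3 \<le> card (C - {m})" using c4 mC fC by simp
      show "M \<in> C - {m}" using MC mM by simp
      show "q \<in> C - {m}" using qC by simp
      fix c assume "c \<in> C - {m}" then show "q \<le> c" "c \<le> M" using bnd qmin by auto
    next
      fix a b assume ab: "a \<in> C - {m}" "b \<in> C - {m}" "a < b"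
      have "m \<le> a" using bnd ab by blast
      then have "{c\<in>C - {m}. a < c \<and> c < b} = {c\<in>C. a < c \<and> c < b}" by auto
      then have "nb (C - {m}) a b \<longleftrightarrow> nb C a b" unfolding nb_def by blast
      then show "E a b \<longleftrightarrow> nb (C - {m}) a b" using ed[of a b] ab by auto
    qed
    have h1: "\<forall>c\<in>C - {m}. c \<noteq> M \<and> c \<noteq> q \<longrightarrow> \<not> E t c"
    proof (intro ballI impI notI)
      fix c assume c: "c \<in> C - {m}" "c \<noteq> M \<and> c \<noteq> q" and Etc: "E t c"
      have qc: "q < c" using qmin c by force
      have "E m c" using pg_X[OF pg mV tV qV _ mt tq qc Emq Etc] c CV by auto
      moreover have "\<not> nb C m c" unfolding nb_def using qC mq qc by auto
      moreover have mc: "m < c" using mq qc by simp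
      ultimately show False using ed[of m c] c mC by auto
    qed
    have h2: "\<forall>v\<in>V. t < v \<and> v < q \<longrightarrow> \<not> E v M" using tmax T_def mt by force
    obtain C' where C': "cyc V E C' t M" using ext_left[OF pg ip tq tV EtM h1 h2] by blast
    have "{v\<in>V. t \<le> v \<and> v \<le> M} \<subset> {v\<in>V. m \<le> v \<and> v \<le> M}" using mt mV mM by force
    then have "card {v\<in>V. t \<le> v \<and> v \<le> M} < card {v\<in>V. m \<le> v \<and> v \<le> M}"
      by (rule psubset_card_mono[rotated]) (simp add: finV)
    then show False using less.hyps C' by blast
  qed
qed


lemma no4:
  assumes pg: "persistent_graph V E" and V: "w \<in> V" "x \<in> V" "y \<in> V" "z \<in> V"
    and o: "w < x" "x < y" "y < z"
    and e: "E w x" "E x y" "E y z" "E w z" "\<not> E w y" "\<not> E x z"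
  shows False
proof -
  have "cyc V E {w, x, y, z} w z"
    unfolding cyc_def
  proof (intro conjI ballI impI)
    show "finite {w, x, y, z}" by simp
    show "{w, x, y, z} \<subseteq> V" using V by simp
    have "w \<notin> {x, y, z}" "x \<notin> {y, z}" "y \<noteq> z" using o by auto
    then show "4 \<le> card {w, x, y, z}" by simp
    show "w \<in> {w, x, y, z}" "z \<in> {w, x, y, z}" by simp_all
    fix c assume "c \<in> {w, x, y, z}" then show "w \<le> c" "c \<le> z" using o by auto
  next
    fix a b assume ab: "a \<in> {w, x, y, z}" "b \<in> {w, x, y, z}" "a < b"
    have nbs: "nb {w, x, y, z} w x" "nb {w, x, y, z} x y" "nb {w, x, y, z} y z"
      "\<not> nb {w, x, y, z} w y" "\<not> nb {w, x, y, z} x z" "\<not> nb {w, x, y, z} w z"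
      using o unfolding nb_def by auto
    show "E a b \<longleftrightarrow> (nb {w, x, y, z} a b \<or> (a = w \<and> b = z))"
      using ab o e nbs by auto
  qed
  then show False using no_cyc[OF pg] by blast
qed

lemma leftC4:
  assumes pg: "persistent_graph V E" and V: "a \<in> V" "b \<in> V" "c \<in> V" "d \<in> V"
    and C4: "induced_C4 E a b c d" and o: "a < b" "a < c" "a < d"
  shows "two_leftmost {a, b, c, d} a c"
proof -
  have dist: "distinct [a, b, c, d]" and e: "E a b" "E b c" "E c d" "E d a" "\<not> E a c" "\<not> E b d"
    using C4 unfolding induced_C4_def by auto
  have e2: "E a d" "E c b" "E d c" "\<not> E d b" using e pg_sym[OF pg] by blast+
  have cb: "c < b"
  proof (rule ccontr)
    assume "\<not> c < b"
    then have bc: "b < c" using dist by auto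
    consider "c < d" | "b < d" "d < c" | "d < b" using dist by force
    then show False
    proof cases
      case 1 then show False using no4[OF pg V(1,2,3,4) o(1) bc 1 e(1,2,3) e2(1) e(5,6)] by blast
    next
      case 2 then show False using pg_X[OF pg V(1,2,4,3) o(1) 2 e2(1) e(2)] e(5) by blast
    next
      case 3 then show False using pg_X[OF pg V(1,4,2,3) o(3) 3 bc e(1) e2(3)] e(5) by blast
    qed
  qed
  have cd: "c < d"
  proof (rule ccontr)
    assume "\<not> c < d"
    then have dc: "d < c" using dist by auto
    consider "c < b" | "d < b" "b < c" | "b < d" using dist by force
    then show False
    proof cases
      case 1 then show False using no4[OF pg V(1,4,3,2) o(3) dc 1 e2(1) e2(3) e2(2) e(1) e(5) e2(4)] by blast
    next
      case 2 then show False using pg_X[OF pg V(1,4,2,3) o(3) 2 e(1) e2(3)] e(5) by blast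
    next
      case 3 then show False using pg_X[OF pg V(1,2,4,3) o(1) 3 dc e2(1) e(2)] e(5) by blast
    qed
  qed
  show ?thesis unfolding two_leftmost_def using cb cd o dist by auto
qed

theorem mainTheorem5:
  fixes V :: "'a::linorder set" and E :: "'a \<Rightarrow> 'a \<Rightarrow> bool"
  assumes "persistent_graph V E"
    and "p1 \<in> V" "p2 \<in> V" "p3 \<in> V" "p4 \<in> V"
    and "induced_C4 E p1 p2 p3 p4"
  shows "two_leftmost {p1, p2, p3, p4} p1 p3 \<or> two_leftmost {p1, p2, p3, p4} p2 p4"
proof -
  note pg = assms(1)
  have dist: "distinct [p1, p2, p3, p4]" and e: "E p1 p2" "E p2 p3" "E p3 p4" "E p4 p1" "\<not> E p1 p3" "\<not> E p2 p4"
    using assms(6) unfolding induced_C4_def by auto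
  have e2: "E p2 p1" "E p3 p2" "E p4 p3" "E p1 p4" "\<not> E p3 p1" "\<not> E p4 p2"
    using e pg_sym[OF pg] by blast+
  have sw: "\<And>P x y. two_leftmost P x y \<Longrightarrow> two_leftmost P y x" unfolding two_leftmost_def by auto
  have r2: "induced_C4 E p2 p3 p4 p1" using dist e e2 unfolding induced_C4_def by auto
  have r3: "induced_C4 E p3 p4 p1 p2" using dist e e2 unfolding induced_C4_def by auto
  have r4: "induced_C4 E p4 p1 p2 p3" using dist e e2 unfolding induced_C4_def by auto
  have s2: "{p2, p3, p4, p1} = {p1, p2, p3, p4}" by auto
  have s3: "{p3, p4, p1, p2} = {p1, p2, p3, p4}" by auto
  have s4: "{p4, p1, p2, p3} = {p1, p2, p3, p4}" by auto
  define mn where "mn = Min {p1, p2, p3, p4}"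
  have mnin: "mn \<in> {p1, p2, p3, p4}" unfolding mn_def by (rule Min_in) auto
  have mnle: "\<And>x. x \<in> {p1, p2, p3, p4} \<Longrightarrow> mn \<le> x" unfolding mn_def by (rule Min_le) auto
  consider "mn = p1" | "mn = p2" | "mn = p3" | "mn = p4" using mnin by blast
  then show ?thesis
  proof cases
    case 1
    then have "p1 < p2" "p1 < p3" "p1 < p4" using mnle[of p2] mnle[of p3] mnle[of p4] dist by force+
    then show ?thesis using leftC4[OF pg assms(2-5) assms(6)] by blast
  next
    case 2
    then have "p2 < p3" "p2 < p4" "p2 < p1" using mnle[of p1] mnle[of p3] mnle[of p4] dist by force+
    then show ?thesis using leftC4[OF pg assms(3,4,5,2) r2] s2 by simp
  next
    case 3
    then have "p3 < p4" "p3 < p1" "p3 < p2" using mnle[of p1] mnle[of p2] mnle[of p4] dist by force+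
    then show ?thesis using leftC4[OF pg assms(4,5,2,3) r3] s3 sw by metis
  next
    case 4
    then have "p4 < p1" "p4 < p2" "p4 < p3" using mnle[of p1] mnle[of p2] mnle[of p3] dist by force+
    then show ?thesis using leftC4[OF pg assms(5,2,3,4) r4] s4 sw by metis
  qed
qed

end
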